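(* Let $Q$ be a quadrilateral in $K^2$ in standard form with centroid $(h,k)$ and coefficient $\mu$. (1) A line $\ell$ is a bisector of $Q$ with midpoint $(p,q)\neq(0,0)$ if and only if $q(q-2k)-\mu p(p-2h)=0$ and $\ell$ has equation $qX+pY-2pq=0$. (2) If $(h,k)=(0,0)$, every line through $(0,0)$ is a bisector of $Q$ with midpoint $(0,0)$. (3) If $(h,k)\neq(0,0)$, then the unique bisector of $Q$ whose midpoint is $(0,0)$ is the line $kY+\mu hX=0$.
   Context: $K$ is a field of characteristic $\neq 2$; we work in $K^2$ inside the projective plane. A quadrilateral $Q=ABA'B'$ consists of four distinct lines $A,B,A',B'$ (sides), not all through one point, with adjacent sides ($A,B$; $B,A'$; $A',B'$; $B',A$) not parallel; opposite sides may be parallel. Vertices: $A\cap B$, $B\cap A'$, $A'\cap B'$, $B'\cap A$ (two may coincide if three sides are concurrent). The centroid is the average of the four vertices (equivalently the midpoint of the midpoints of the diagonals). $Q$ is in standard form if $A$ is the line $Y=0$ and $A'$ is the line $X=0$; then $B$ and $B'$ are neither horizontal nor vertical, and the coefficient of $Q$ is $\mu=t_Bt_{B'}$, the product of the slopes of $B$ and $B'$. A line $\ell$ crosses a pair $\{\ell_1,\ell_2\}$ if it is distinct from both and not parallel to both; $\mathrm{mid}_{\{\ell_1,\ell_2\}}(\ell)$ is the midpoint of the points where $\ell$ meets $\ell_1,\ell_2$ (the point at infinity of $\ell$ if one of them is at infinity). $\ell$ bisects $Q$ (is a bisector) if $\mathrm{mid}_{\mathsf P}(\ell)$ is the same for all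 pairs $\mathsf P$ among $\{A,A'\},\{B,B'\}$ that $\ell$ crosses; this common point is the midpoint of the bisector. *)

theory Defs
  imports Main
begin

definition is_line :: "('a::field \<times> 'a) set \<Rightarrow> bool" where
  "is_line L \<longleftrightarrow> (\<exists>a b c. (a, b) \<noteq> (0, 0) \<and> L = {(x, y). a * x + b * y + c = 0})"

text \<open>Direction (1-dimensional subspace) of a line; it represents the point at infinity.\<close>
definition line_dir :: "('a::field \<times> 'a) set \<Rightarrow> ('a \<times> 'a) set" where
  "line_dir L = {(fst P - fst R, snd P - snd R) | P R. P \<in> L \<and> R \<in> L}"

definition parallel :: "('a::field \<times> 'a) set \<Rightarrow> ('a \<times> 'a) set \<Rightarrow> bool" where
  "parallel L M \<longleftrightarrow> line_dir L = line_dir M"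

definition meet :: "('a::field \<times> 'a) set \<Rightarrow> ('a \<times> 'a) set \<Rightarrow> 'a \<times> 'a" where
  "meet L M = (THE P. P \<in> L \<and> P \<in> M)"

text \<open>Points of the projective plane: affine points, or points at infinity
  (represented by a direction).\<close>
datatype 'a ppoint = Fin "'a \<times> 'a" | Inf "('a \<times> 'a) set"

definition midp :: "('a::field \<times> 'a) \<Rightarrow> 'a \<times> 'a \<Rightarrow> 'a \<times> 'a" where
  "midp P R = ((fst P + fst R) / 2, (snd P + snd R) / 2)"

definition quadrilateral ::
  "('a::field \<times> 'a) set \<Rightarrow> ('a \<times> 'a) set \<Rightarrow> ('a \<times> 'a) set \<Rightarrow> ('a \<times> 'a) set \<Rightarrow> bool" where
  "quadrilateral A B A' B' \<longleftrightarrow>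
     is_line A \<and> is_line B \<and> is_line A' \<and> is_line B' \<and>
     A \<noteq> B \<and> A \<noteq> A' \<and> A \<noteq> B' \<and> B \<noteq> A' \<and> B \<noteq> B' \<and> A' \<noteq> B' \<and>
     \<not> (\<exists>P. P \<in> A \<and> P \<in> B \<and> P \<in> A' \<and> P \<in> B') \<and>
     \<not> parallel A B \<and> \<not> parallel B A' \<and> \<not> parallel A' B' \<and> \<not> parallel B' A"

definition vertices ::
  "('a::field \<times> 'a) set \<Rightarrow> ('a \<times> 'a) set \<Rightarrow> ('a \<times> 'a) set \<Rightarrow> ('a \<times> 'a) set \<Rightarrow> ('a \<times> 'a) list" where
  "vertices A B A' B' = [meet A B, meet B A', meet A' B', meet B' A]"

definition centroid ::
  "('a::field \<times> 'a) set \<Rightarrow> ('a \<times> 'a) set \<Rightarrow> ('a \<times> 'a) set \<Rightarrow> ('a \<times> 'a) set \<Rightarrow> 'a \<times> 'a" where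
  "centroid A B A' B' =
     ((fst (meet A B) + fst (meet B A') + fst (meet A' B') + fst (meet B' A)) / 4,
      (snd (meet A B) + snd (meet B A') + snd (meet A' B') + snd (meet B' A)) / 4)"

definition standard_form ::
  "('a::field \<times> 'a) set \<Rightarrow> ('a \<times> 'a) set \<Rightarrow> ('a \<times> 'a) set \<Rightarrow> ('a \<times> 'a) set \<Rightarrow> bool" where
  "standard_form A B A' B' \<longleftrightarrow> quadrilateral A B A' B' \<and>
     A = {(x, y). y = 0} \<and> A' = {(x, y). x = 0}"

definition slope :: "('a::field \<times> 'a) set \<Rightarrow> 'a" where
  "slope L = (THE t. \<exists>c. L = {(x, y). y = t * x + c})"

definition coefficient ::
  "('a::field \<times> 'a) set \<Rightarrow> ('a \<times> 'a) set \<Rightarrow> ('a \<times> 'a) set \<Rightarrow> ('a \<times> 'a) set \<Rightarrow> 'a" where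
  "coefficient A B A' B' = slope B * slope B'"

definition crosses :: "('a::field \<times> 'a) set \<Rightarrow> ('a \<times> 'a) set \<Rightarrow> ('a \<times> 'a) set \<Rightarrow> bool" where
  "crosses L L1 L2 \<longleftrightarrow> L \<noteq> L1 \<and> L \<noteq> L2 \<and> \<not> (parallel L L1 \<and> parallel L L2)"

definition mid :: "('a::field \<times> 'a) set \<Rightarrow> ('a \<times> 'a) set \<Rightarrow> ('a \<times> 'a) set \<Rightarrow> 'a ppoint" where
  "mid L1 L2 L = (if parallel L L1 \<or> parallel L L2 then Inf (line_dir L)
                  else Fin (midp (meet L L1) (meet L L2)))"

definition bisector_with_mid ::
  "('a::field \<times> 'a) set \<Rightarrow> ('a \<times> 'a) set \<Rightarrow> ('a \<times> 'a) set \<Rightarrow> ('a \<times> 'a) set \<Rightarrow>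
   ('a \<times> 'a) set \<Rightarrow> 'a ppoint \<Rightarrow> bool" where
  "bisector_with_mid A B A' B' L M \<longleftrightarrow> is_line L \<and>
     (crosses L A A' \<or> crosses L B B') \<and>
     (crosses L A A' \<longrightarrow> mid A A' L = M) \<and>
     (crosses L B B' \<longrightarrow> mid B B' L = M)"

end

theory Submission
  imports Defs
begin


definition lin :: "'a::field \<Rightarrow> 'a \<Rightarrow> 'a \<Rightarrow> ('a \<times> 'a) set" where
  "lin a b c = {(x, y). a * x + b * y + c = 0}"

lemma lin_eq_iff:
  fixes a b c a' b' c' :: "'a::field"
  assumes n1: "(a, b) \<noteq> (0, 0)" and n2: "(a', b') \<noteq> (0, 0)"
  shows "lin a b c = lin a' b' c' \<longleftrightarrow> a * b' = a' * b \<and> a * c' = a' * c \<and> b * c' = b' * c"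
proof
  assume eq: "lin a b c = lin a' b' c'"
  show "a * b' = a' * b \<and> a * c' = a' * c \<and> b * c' = b' * c"
  proof (cases "b = 0")
    case False
    have "(0, -c/b) \<in> lin a b c" "(1, -(a+c)/b) \<in> lin a b c"
      using False by (auto simp: lin_def field_simps)
    hence "(0, -c/b) \<in> lin a' b' c'" "(1, -(a+c)/b) \<in> lin a' b' c'" using eq by auto
    hence e1: "b * c' = b' * c" and e2: "b * a' - b' * a - b' * c + b * c' = 0"
      using False by (auto simp: lin_def field_simps)
    have e3: "b * a' = b' * a" using e1 e2 by (simp add: algebra_simps)
    have "b * (a * c' - a' * c) = a * (b * c') - c * (b * a')" by (simp add: algebra_simps)
    also have "\<dots> = 0" using e1 e3 by (simp add: algebra_simps)
    finally have "b * (a * c' - a' * c) = 0" .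
    hence "a * c' = a' * c" using False by simp
    thus ?thesis using e1 e3 by (simp add: algebra_simps)
  next
    case True
    hence a0: "a \<noteq> 0" using n1 by auto
    have "(-c/a, 0) \<in> lin a b c" "(-c/a, 1) \<in> lin a b c"
      using True a0 by (auto simp: lin_def field_simps)
    hence "(-c/a, 0) \<in> lin a' b' c'" "(-c/a, 1) \<in> lin a' b' c'" using eq by auto
    hence e1: "a * c' = a' * c" and e2: "b' = 0"
      using a0 by (auto simp: lin_def field_simps)
    thus ?thesis using True by simp
  qed
next
  assume d: "a * b' = a' * b \<and> a * c' = a' * c \<and> b * c' = b' * c"
  have one: "a' * x + b' * y + c' = 0" if "a * x + b * y + c = 0"
    "(a, b) \<noteq> (0, 0)" "a * b' = a' * b" "a * c' = a' * c" "b * c' = b' * c"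
    for a b c a' b' c' x y :: 'a
  proof (cases "a = 0")
    case False
    have "a * (a' * x + b' * y + c') - a' * (a * x + b * y + c) = (a * b' - a' * b) * y + (a * c' - a' * c)"
      by (simp add: algebra_simps)
    thus ?thesis using that False by simp
  next
    case True
    hence "b \<noteq> 0" using that by auto
    have "b * (a' * x + b' * y + c') - b' * (a * x + b * y + c) = (b * a' - b' * a) * x + (b * c' - b' * c)"
      by (simp add: algebra_simps)
    moreover have "b * a' - b' * a = 0" using that True by (simp add: algebra_simps)
    ultimately show ?thesis using that \<open>b \<noteq> 0\<close> by simp
  qed
  have i1: "a' * x + b' * y + c' = 0" if "a * x + b * y + c = 0" for x y
    using one[OF that n1] d by blast
  have i2: "a * x + b * y + c = 0" if "a' * x + b' * y + c' = 0" for x y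
  proof (rule one[OF that n2])
    show "a' * b = a * b'" "a' * c = a * c'" "b' * c = b * c'" using d by simp_all
  qed
  show "lin a b c = lin a' b' c'"
    unfolding lin_def using i1 i2 by auto
qed

lemma line_dir_lin:
  fixes a b c :: "'a::field"
  assumes n: "(a, b) \<noteq> (0, 0)"
  shows "line_dir (lin a b c) = lin a b 0"
proof
  show "line_dir (lin a b c) \<subseteq> lin a b 0"
  proof
    fix v assume "v \<in> line_dir (lin a b c)"
    then obtain x1 y1 x2 y2 where v: "v = (x1 - x2, y1 - y2)" and
      p1: "a * x1 + b * y1 + c = 0" and p2: "a * x2 + b * y2 + c = 0"
      unfolding line_dir_def lin_def by auto
    have "a * (x1 - x2) + b * (y1 - y2) = (a * x1 + b * y1 + c) - (a * x2 + b * y2 + c)"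
      by (simp add: algebra_simps)
    thus "v \<in> lin a b 0" using p1 p2 v by (simp add: lin_def)
  qed
next
  show "lin a b 0 \<subseteq> line_dir (lin a b c)"
  proof
    fix v assume v: "v \<in> lin a b 0"
    obtain u w where vv: "v = (u, w)" by (cases v)
    obtain P where P: "P \<in> lin a b c"
    proof (cases "b = 0")
      case True
      hence "a \<noteq> 0" using n by auto
      thus ?thesis using that[of "(-c/a, 0)"] True by (auto simp: lin_def field_simps)
    next
      case False
      thus ?thesis using that[of "(0, -c/b)"] by (auto simp: lin_def field_simps)
    qed
    have "(fst P + u, snd P + w) \<in> lin a b c" using P v vv
      by (cases P) (auto simp: lin_def algebra_simps)
    moreover have "(u, w) = (fst (fst P + u, snd P + w) - fst P, snd (fst P + u, snd P + w) - snd P)"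
      by simp
    ultimately show "v \<in> line_dir (lin a b c)" unfolding line_dir_def vv using P
      by blast
  qed
qed

lemma parallel_lin:
  fixes a b c a' b' c' :: "'a::field"
  assumes n1: "(a, b) \<noteq> (0, 0)" and n2: "(a', b') \<noteq> (0, 0)"
  shows "parallel (lin a b c) (lin a' b' c') \<longleftrightarrow> a * b' = a' * b"
  unfolding parallel_def using n1 n2 by (simp add: line_dir_lin lin_eq_iff)

lemma meet_lin:
  fixes a b c a' b' c' :: "'a::field"
  assumes D: "a * b' \<noteq> a' * b"
  shows "meet (lin a b c) (lin a' b' c') =
    ((b * c' - b' * c) / (a * b' - a' * b), (a' * c - a * c') / (a * b' - a' * b))"
proof -
  have D': "a * b' - a' * b \<noteq> 0" using D by simp
  let ?P = "((b * c' - b' * c) / (a * b' - a' * b), (a' * c - a * c') / (a * b' - a' * b))"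
  show ?thesis unfolding meet_def
  proof (rule the_equality)
    show "?P \<in> lin a b c \<and> ?P \<in> lin a' b' c'" using D'
      by (simp add: lin_def field_simps)
  next
    fix Q assume Q: "Q \<in> lin a b c \<and> Q \<in> lin a' b' c'"
    obtain x y where Qe: "Q = (x, y)" by (cases Q)
    have e1: "a * x + b * y + c = 0" and e2: "a' * x + b' * y + c' = 0" using Q Qe by (auto simp: lin_def)
    have "(a * b' - a' * b) * x = b * c' - b' * c"
    proof -
      have "(a * b' - a' * b) * x = b' * (a * x + b * y + c) - b * (a' * x + b' * y + c') + (b * c' - b' * c)"
        by (simp add: algebra_simps)
      thus ?thesis using e1 e2 by simp
    qed
    moreover have "(a * b' - a' * b) * y = a' * c - a * c'"
    proof -
      have "(a * b' - a' * b) * y = a * (a' * x + b' * y + c') - a' * (a * x + b * y + c) + (a' * c - a * c')"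
        by (simp add: algebra_simps)
      thus ?thesis using e1 e2 by simp
    qed
    ultimately show "Q = ?P" using Qe D' by (simp add: field_simps)
  qed
qed

lemma slope_eq:
  fixes t c :: "'a::field"
  shows "slope {(x, y). y = t * x + c} = t"
  unfolding slope_def
proof (rule the_equality)
  fix t' assume "\<exists>c'. {(x, y). y = t * x + c} = {(x, y::'a). y = t' * x + c'}"
  then obtain c' where e: "{(x, y). y = t * x + c} = {(x, y::'a). y = t' * x + c'}" by blast
  have "(0, c) \<in> {(x, y). y = t * x + c}" "(1, t + c) \<in> {(x, y). y = t * x + c}" by auto
  hence m: "(0, c) \<in> {(x, y::'a). y = t' * x + c'}" "(1, t + c) \<in> {(x, y::'a). y = t' * x + c'}"
    unfolding e by blast+
  from m(1) have e1: "c = c'" by simp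
  from m(2) have e2: "t + c = t' + c'" by simp
  from e1 e2 show "t' = t" by simp
qed auto




definition PP :: "'a::field \<Rightarrow> 'a \<Rightarrow> 'a \<Rightarrow> 'a \<Rightarrow> 'a \<Rightarrow> 'a \<Rightarrow> 'a" where
  "PP t s t' s' p q = 2 * q ^ 2 - q * (s + s') - 2 * t * t' * p ^ 2 - p * (s * t' + s' * t)"

lemma PP_sym: "PP t s t' s' p q = PP t' s' t s p q"
  unfolding PP_def by (simp add: algebra_simps)

lemma PP_par: "q = - (t * p) \<Longrightarrow> PP t s t' s' p q = p * (t - t') * (2 * t * p + s)"
  unfolding PP_def by (simp add: algebra_simps power2_eq_square)

lemma frac2: "(u::'a::field) \<noteq> 0 \<Longrightarrow> v \<noteq> 0 \<Longrightarrow> X / u + Y / v - Z = (X * v + Y * u - Z * (u * v)) / (u * v)"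
  by (simp add: field_simps)

lemma mid_x:
  fixes t s t' s' p q :: "'a::field"
  assumes "q + t * p \<noteq> 0" "q + t' * p \<noteq> 0"
  shows "p * (2 * q - s) / (q + t * p) + p * (2 * q - s') / (q + t' * p) - 2 * p
     = p * PP t s t' s' p q / ((q + t * p) * (q + t' * p))"
proof -
  have "p * (2 * q - s) * (q + t' * p) + p * (2 * q - s') * (q + t * p) - 2 * p * ((q + t * p) * (q + t' * p))
    = p * PP t s t' s' p q" unfolding PP_def by (simp add: algebra_simps power2_eq_square)
  thus ?thesis by (simp only: frac2[OF assms])
qed

lemma mid_y:
  fixes t s t' s' p q :: "'a::field"
  assumes "q + t * p \<noteq> 0" "q + t' * p \<noteq> 0"
  shows "q * (2 * t * p + s) / (q + t * p) + q * (2 * t' * p + s') / (q + t' * p) - 2 * q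
     = - (q * PP t s t' s' p q) / ((q + t * p) * (q + t' * p))"
proof -
  have "q * (2 * t * p + s) * (q + t' * p) + q * (2 * t' * p + s') * (q + t * p) - 2 * q * ((q + t * p) * (q + t' * p))
    = - (q * PP t s t' s' p q)" unfolding PP_def by (simp add: algebra_simps power2_eq_square)
  thus ?thesis by (simp only: frac2[OF assms])
qed

definition QQ :: "'a::field \<Rightarrow> 'a \<Rightarrow> 'a \<Rightarrow> 'a \<Rightarrow> 'a \<Rightarrow> 'a \<Rightarrow> 'a" where
  "QQ t s t' s' a c = a * (s + s') + c * (s * t' + s' * t)"

lemma meet0_gen: "(a, c) \<noteq> (0, 0) \<Longrightarrow> a + t * c \<noteq> 0 \<Longrightarrow>
  meet (lin a c 0) (lin t (-1) s) = (- (c * s) / (a + t * c), a * s / (a + t * c))"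
proof -
  assume "a + t * c \<noteq> 0"
  have D: "a * (-1) - t * c = - (a + t * c)" by simp
  have P: "a * (-1) \<noteq> t * c"
  proof
    assume "a * (-1) = t * c"
    hence "t * c = - a" by simp
    thus False using \<open>a + t * c \<noteq> 0\<close> by simp
  qed
  have x: "c * s - (-1) * 0 = c * s" by simp
  have y: "t * 0 - a * s = - (a * s)" by simp
  have xx: "(c * s - (-1) * 0) / (a * (-1) - t * c) = - (c * s) / (a + t * c)" by (simp only: D divide_minus_right) simp
  have yy: "(t * 0 - a * s) / (a * (-1) - t * c) = a * s / (a + t * c)" by (simp only: D divide_minus_right) simp
  show ?thesis by (simp only: meet_lin[OF P] xx yy)
qed

lemma mid0_x:
  fixes t s t' s' a c :: "'a::field"
  assumes "a + t * c \<noteq> 0" "a + t' * c \<noteq> 0"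
  shows "- (c * s) / (a + t * c) + - (c * s') / (a + t' * c)
     = - (c * QQ t s t' s' a c) / ((a + t * c) * (a + t' * c))"
proof -
  have "- (c * s) * (a + t' * c) + - (c * s') * (a + t * c) = - (c * QQ t s t' s' a c)"
    unfolding QQ_def by (simp add: algebra_simps)
  thus ?thesis by (simp only: add_frac_eq[OF assms])
qed

lemma mid0_y:
  fixes t s t' s' a c :: "'a::field"
  assumes "a + t * c \<noteq> 0" "a + t' * c \<noteq> 0"
  shows "a * s / (a + t * c) + a * s' / (a + t' * c)
     = a * QQ t s t' s' a c / ((a + t * c) * (a + t' * c))"
proof -
  have "a * s * (a + t' * c) + a * s' * (a + t * c) = a * QQ t s t' s' a c"
    unfolding QQ_def by (simp add: algebra_simps)
  thus ?thesis by (simp only: add_frac_eq[OF assms])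
qed



lemma is_line_lin: "(a, b) \<noteq> (0, 0) \<Longrightarrow> is_line (lin a b c)"
  unfolding is_line_def lin_def by blast

lemma is_line_iff: "is_line L \<longleftrightarrow> (\<exists>a b c. (a, b) \<noteq> (0, 0) \<and> L = lin a b c)"
  unfolding is_line_def lin_def by blast

context
  fixes b \<beta> b' \<beta>' h k :: "'a::field"
  assumes two: "(2::'a) \<noteq> 0" and b0: "b \<noteq> 0" and b0': "b' \<noteq> 0"
    and nB: "(b, \<beta>) \<noteq> (b', \<beta>')" and nc: "\<not> (\<beta> = 0 \<and> \<beta>' = 0)"
    and hdef: "4 * h = - (\<beta> / b + \<beta>' / b')" and kdef: "4 * k = \<beta> + \<beta>'"
begin

lemma four: "(4::'a) \<noteq> 0"
proof -
  have "(4::'a) = 2 * 2" by simp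
  thus ?thesis using two by (metis mult_eq_0_iff)
qed

lemma midAA: "(a, c) \<noteq> (0, 0) \<Longrightarrow> mid (lin 0 1 0) (lin 1 0 0) (lin a c d) =
  (if a = 0 \<or> c = 0 then Inf (line_dir (lin a c d)) else Fin (- d / (2 * a), - d / (2 * c)))"
proof -
  assume n: "(a, c) \<noteq> (0, 0)"
  have p1: "parallel (lin a c d) (lin 0 1 0) \<longleftrightarrow> a = 0" using n by (simp add: parallel_lin)
  have p2: "parallel (lin a c d) (lin 1 0 0) \<longleftrightarrow> c = 0" using n by (simp add: parallel_lin)
  show ?thesis
  proof (cases "a = 0 \<or> c = 0")
    case True thus ?thesis unfolding mid_def using p1 p2 by auto
  next
    case False
    have m1: "meet (lin a c d) (lin 0 1 0) = (- d / a, 0)" using False by (simp add: meet_lin)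
    have m2: "meet (lin a c d) (lin 1 0 0) = (0, - d / c)" using False by (simp add: meet_lin)
    have e: "(- d / a + 0) / 2 = - d / (2 * a)" "(0 + - d / c) / 2 = - d / (2 * c)"
      by (simp_all add: divide_divide_eq_left mult.commute)
    show ?thesis unfolding mid_def using False p1 p2 by (simp add: m1 m2 midp_def e)
  qed
qed

lemma meetAB: "meet (lin 0 1 0) (lin b (-1) \<beta>) = (- (\<beta> / b), 0)"
  "meet (lin 0 1 0) (lin b' (-1) \<beta>') = (- (\<beta>' / b'), 0)"
  "meet (lin 1 0 0) (lin b (-1) \<beta>) = (0, \<beta>)"
  "meet (lin 1 0 0) (lin b' (-1) \<beta>') = (0, \<beta>')"
  using b0 b0' by (simp_all add: meet_lin)

lemma midBB_A: "mid (lin b (-1) \<beta>) (lin b' (-1) \<beta>') (lin 0 1 0) = Fin (2 * h, 0)"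
proof -
  have "(- (\<beta> / b) + - (\<beta>' / b')) / 2 = 2 * h"
  proof -
    have "2 * h = (4 * h) / 2" using two by (simp add: field_simps)
    thus ?thesis using hdef by simp
  qed
  thus ?thesis unfolding mid_def using b0 b0' by (simp add: parallel_lin meetAB midp_def)
qed

lemma midBB_A': "mid (lin b (-1) \<beta>) (lin b' (-1) \<beta>') (lin 1 0 0) = Fin (0, 2 * k)"
proof -
  have "(\<beta> + \<beta>') / 2 = 2 * k"
  proof -
    have "2 * k = (4 * k) / 2" using two by (simp add: field_simps)
    thus ?thesis using kdef by simp
  qed
  thus ?thesis unfolding mid_def using b0 b0' by (simp add: parallel_lin meetAB midp_def)
qed

lemma A_ne: "lin 0 1 0 \<noteq> lin b (-1) \<beta>" "lin 0 1 0 \<noteq> lin b' (-1) \<beta>'"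
   "lin 1 0 0 \<noteq> lin b (-1) \<beta>" "lin 1 0 0 \<noteq> lin b' (-1) \<beta>'"
  using b0 b0' by (auto simp: lin_eq_iff)

lemma A_npar: "\<not> parallel (lin 0 1 0) (lin b (-1) \<beta>)" "\<not> parallel (lin 0 1 0) (lin b' (-1) \<beta>')"
   "\<not> parallel (lin 1 0 0) (lin b (-1) \<beta>)" "\<not> parallel (lin 1 0 0) (lin b' (-1) \<beta>')"
  using b0 b0' by (auto simp: parallel_lin)

lemma crossesAA: "(a, c) \<noteq> (0, 0) \<Longrightarrow> crosses (lin a c d) (lin 0 1 0) (lin 1 0 0) \<longleftrightarrow>
   \<not> (a = 0 \<and> d = 0) \<and> \<not> (c = 0 \<and> d = 0)"
proof -
  assume n: "(a, c) \<noteq> (0, 0)"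
  have p1: "parallel (lin a c d) (lin 0 1 0) \<longleftrightarrow> a = 0" using n by (simp add: parallel_lin)
  have p2: "parallel (lin a c d) (lin 1 0 0) \<longleftrightarrow> c = 0" using n by (simp add: parallel_lin)
  have e1: "lin a c d = lin 0 1 0 \<longleftrightarrow> a = 0 \<and> d = 0" using n by (subst lin_eq_iff) auto
  have e2: "lin a c d = lin 1 0 0 \<longleftrightarrow> c = 0 \<and> d = 0" using n by (subst lin_eq_iff) auto
  show ?thesis unfolding crosses_def using n p1 p2 e1 e2 by auto
qed

lemma meetB_gen: "(q, p) \<noteq> (0, 0) \<Longrightarrow> q + t * p \<noteq> 0 \<Longrightarrow>
  meet (lin q p (- 2 * p * q)) (lin t (-1) s) = (p * (2 * q - s) / (q + t * p), q * (2 * t * p + s) / (q + t * p))"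
proof -
  assume "q + t * p \<noteq> 0"
  have D: "q * (-1) - t * p = - (q + t * p)" by simp
  have D0: "q * (-1) - t * p \<noteq> 0" unfolding D using \<open>q + t * p \<noteq> 0\<close> by (metis neg_equal_0_iff_equal)
  have x: "p * s - (-1) * (- 2 * p * q) = - (p * (2 * q - s))" by (simp add: algebra_simps)
  have y: "t * (- 2 * p * q) - q * s = - (q * (2 * t * p + s))" by (simp add: algebra_simps)
  have P: "q * (-1) \<noteq> t * p"
  proof
    assume "q * (-1) = t * p"
    hence "t * p = - q" by simp
    thus False using \<open>q + t * p \<noteq> 0\<close> by simp
  qed
  show ?thesis by (simp only: meet_lin[OF P] D x y minus_divide_divide)
qed

lemma hb4: "4 * h * b * b' = - (\<beta> * b' + \<beta>' * b)"
proof -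
  have "- (\<beta> / b + \<beta>' / b') * b * b' = - (\<beta> * b' + \<beta>' * b)"
    using b0 b0' by (simp add: field_simps)
  thus ?thesis using hdef by simp
qed

lemma E_PP: "2 * (q * (q - 2 * k) - b * b' * p * (p - 2 * h)) = PP b \<beta> b' \<beta>' p q"
proof -
  have "2 * (q * (q - 2 * k) - b * b' * p * (p - 2 * h))
     = 2 * q ^ 2 - q * (4 * k) - 2 * b * b' * p ^ 2 + p * (4 * h * b * b')"
    by (simp add: algebra_simps power2_eq_square)
  also have "\<dots> = PP b \<beta> b' \<beta>' p q" unfolding kdef hb4 PP_def by (simp add: algebra_simps)
  finally show ?thesis .
qed

lemma E0: "q * (q - 2 * k) - b * b' * p * (p - 2 * h) = 0 \<longleftrightarrow> PP b \<beta> b' \<beta>' p q = 0"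
  using E_PP[of q p] two by (metis mult_eq_0_iff)

lemma QQ_hk: "QQ b \<beta> b' \<beta>' a c = 4 * (a * k - b * b' * h * c)"
proof -
  have "4 * (a * k - b * b' * h * c) = a * (4 * k) - c * (4 * h * b * b')"
    by (simp add: algebra_simps)
  also have "\<dots> = QQ b \<beta> b' \<beta>' a c" unfolding kdef hb4 QQ_def by (simp add: algebra_simps)
  finally show ?thesis ..
qed

lemma QQ_sym: "QQ t s t' s' a c = QQ t' s' t s a c"
  unfolding QQ_def by (simp add: algebra_simps)

lemma QQ_par: "a = - (t * c) \<Longrightarrow> QQ t s t' s' a c = c * s * (t' - t)"
  unfolding QQ_def by (simp add: algebra_simps)

lemma bisA: "bisector_with_mid (lin 0 1 0) (lin b (-1) \<beta>) (lin 1 0 0) (lin b' (-1) \<beta>') (lin 0 1 0) M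
   \<longleftrightarrow> M = Fin (2 * h, 0)"
proof -
  have "is_line (lin 0 1 (0::'a))" by (rule is_line_lin) simp
  moreover have "\<not> crosses (lin 0 1 0) (lin 0 1 0) (lin 1 0 (0::'a))" unfolding crosses_def by simp
  moreover have "crosses (lin 0 1 0) (lin b (-1) \<beta>) (lin b' (-1) \<beta>')"
    unfolding crosses_def using A_ne A_npar by simp
  ultimately show ?thesis unfolding bisector_with_mid_def midBB_A by auto
qed

lemma bisA': "bisector_with_mid (lin 0 1 0) (lin b (-1) \<beta>) (lin 1 0 0) (lin b' (-1) \<beta>') (lin 1 0 0) M
   \<longleftrightarrow> M = Fin (0, 2 * k)"
proof -
  have "is_line (lin 1 0 (0::'a))" by (rule is_line_lin) simp
  moreover have "\<not> crosses (lin 1 0 0) (lin 0 1 0) (lin 1 0 (0::'a))" unfolding crosses_def by simp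
  moreover have "crosses (lin 1 0 0) (lin b (-1) \<beta>) (lin b' (-1) \<beta>')"
    unfolding crosses_def using A_ne A_npar by simp
  ultimately show ?thesis unfolding bisector_with_mid_def midBB_A' by auto
qed

lemma parL: "(q, p) \<noteq> (0, 0) \<Longrightarrow> parallel (lin q p r) (lin t (-1) s) \<longleftrightarrow> q = - (t * p)"
proof -
  assume n: "(q, p) \<noteq> (0, 0)"
  have "parallel (lin q p r) (lin t (-1) s) \<longleftrightarrow> q * (-1) = t * p" using n by (simp add: parallel_lin)
  also have "\<dots> \<longleftrightarrow> q = - (t * p)" by (metis minus_minus mult_minus1_right)
  finally show ?thesis .
qed

lemma C1:
  assumes p0: "p \<noteq> 0" and q0: "q \<noteq> 0"
  shows "bisector_with_mid (lin 0 1 0) (lin b (-1) \<beta>) (lin 1 0 0) (lin b' (-1) \<beta>')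
           (lin q p (- 2 * p * q)) (Fin (p, q)) \<longleftrightarrow> PP b \<beta> b' \<beta>' p q = 0"
proof -
  let ?L = "lin q p (- 2 * p * q)"
  let ?B = "lin b (-1) \<beta>" and ?B' = "lin b' (-1) \<beta>'"
  have nL: "(q, p) \<noteq> (0, 0)" using q0 by simp
  have isL: "is_line ?L" using nL by (rule is_line_lin)
  have cA: "crosses ?L (lin 0 1 0) (lin 1 0 0)" using crossesAA[OF nL] q0 p0 by simp
  have mA: "mid (lin 0 1 0) (lin 1 0 0) ?L = Fin (p, q)"
  proof -
    have "- (- 2 * p * q) / (2 * q) = p" "- (- 2 * p * q) / (2 * p) = q"
      using p0 q0 two by (simp_all add: field_simps)
    thus ?thesis using midAA[OF nL] p0 q0 by simp
  qed
  have eqB: "?L = lin t (-1) s \<longleftrightarrow> q = - (t * p) \<and> s = 2 * q" for t s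
  proof -
    have "?L = lin t (-1) s \<longleftrightarrow> q * (-1) = t * p \<and> q * s = t * (- 2 * p * q) \<and> p * s = (-1) * (- 2 * p * q)"
      using nL by (simp add: lin_eq_iff)
    also have "\<dots> \<longleftrightarrow> q = - (t * p) \<and> s = 2 * q"
    proof
      assume h: "q * (-1) = t * p \<and> q * s = t * (- 2 * p * q) \<and> p * s = (-1) * (- 2 * p * q)"
      hence "p * s = p * (2 * q)" by (simp add: algebra_simps)
      hence "s = 2 * q" using p0 by simp
      moreover have "q = - (t * p)" using h by (metis minus_minus mult_minus1_right)
      ultimately show "q = - (t * p) \<and> s = 2 * q" by simp
    next
      assume "q = - (t * p) \<and> s = 2 * q"
      thus "q * (-1) = t * p \<and> q * s = t * (- 2 * p * q) \<and> p * s = (-1) * (- 2 * p * q)"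
        by (simp add: algebra_simps)
    qed
    finally show ?thesis .
  qed
  have pB: "parallel ?L (lin t (-1) s) \<longleftrightarrow> q = - (t * p)" for t s using parL[OF nL] .
  have bis: "bisector_with_mid (lin 0 1 0) ?B (lin 1 0 0) ?B' ?L (Fin (p, q)) \<longleftrightarrow>
     (crosses ?L ?B ?B' \<longrightarrow> mid ?B ?B' ?L = Fin (p, q))"
    unfolding bisector_with_mid_def using isL cA mA by simp
  have ne: "q + t * p \<noteq> 0" if "\<not> q = - (t * p)" for t
    using that by (simp add: eq_neg_iff_add_eq_0)
  have midf: "mid ?B ?B' ?L = Fin (p, q) \<longleftrightarrow> PP b \<beta> b' \<beta>' p q = 0"
    if n1: "\<not> q = - (b * p)" and n2: "\<not> q = - (b' * p)"
  proof -
    have d1: "q + b * p \<noteq> 0" and d2: "q + b' * p \<noteq> 0" using ne n1 n2 by auto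
    have D: "(q + b * p) * (q + b' * p) \<noteq> 0" using d1 d2 by simp
    have m: "mid ?B ?B' ?L = Fin (midp (p * (2 * q - \<beta>) / (q + b * p), q * (2 * b * p + \<beta>) / (q + b * p))
                     (p * (2 * q - \<beta>') / (q + b' * p), q * (2 * b' * p + \<beta>') / (q + b' * p)))"
      unfolding mid_def using pB n1 n2 meetB_gen[OF nL d1] meetB_gen[OF nL d2] by simp
    let ?x1 = "p * (2 * q - \<beta>) / (q + b * p)" and ?x2 = "p * (2 * q - \<beta>') / (q + b' * p)"
    let ?y1 = "q * (2 * b * p + \<beta>) / (q + b * p)" and ?y2 = "q * (2 * b' * p + \<beta>') / (q + b' * p)"
    have hx: "?x1 + ?x2 - 2 * p = p * PP b \<beta> b' \<beta>' p q / ((q + b * p) * (q + b' * p))"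
      by (rule mid_x[OF d1 d2])
    have hy: "?y1 + ?y2 - 2 * q = - (q * PP b \<beta> b' \<beta>' p q) / ((q + b * p) * (q + b' * p))"
      by (rule mid_y[OF d1 d2])
    have "(?x1 + ?x2) / 2 = p \<longleftrightarrow> ?x1 + ?x2 - 2 * p = 0" using two by (auto simp: field_simps)
    also have "\<dots> \<longleftrightarrow> PP b \<beta> b' \<beta>' p q = 0" using hx D p0 by simp
    finally have ex: "(?x1 + ?x2) / 2 = p \<longleftrightarrow> PP b \<beta> b' \<beta>' p q = 0" .
    have "(?y1 + ?y2) / 2 = q \<longleftrightarrow> ?y1 + ?y2 - 2 * q = 0" using two by (auto simp: field_simps)
    also have "\<dots> \<longleftrightarrow> PP b \<beta> b' \<beta>' p q = 0" using hy D q0 by simp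
    finally have ey: "(?y1 + ?y2) / 2 = q \<longleftrightarrow> PP b \<beta> b' \<beta>' p q = 0" .
    show ?thesis unfolding m midp_def using ex ey by simp
  qed
  show ?thesis
  proof
    assume "bisector_with_mid (lin 0 1 0) ?B (lin 1 0 0) ?B' ?L (Fin (p, q))"
    hence H: "crosses ?L ?B ?B' \<longrightarrow> mid ?B ?B' ?L = Fin (p, q)" using bis by simp
    show "PP b \<beta> b' \<beta>' p q = 0"
    proof (cases "crosses ?L ?B ?B'")
      case True
      hence mm: "mid ?B ?B' ?L = Fin (p, q)" using H by simp
      hence n1: "\<not> q = - (b * p)" and n2: "\<not> q = - (b' * p)"
        unfolding mid_def using pB by (auto split: if_splits)
      show ?thesis using midf[OF n1 n2] mm by simp
    next
      case False
      hence "?L = ?B \<or> ?L = ?B' \<or> (q = - (b * p) \<and> q = - (b' * p))"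
        unfolding crosses_def using pB by blast
      thus ?thesis
      proof (elim disjE)
        assume "?L = ?B"
        hence "q = - (b * p)" "\<beta> = 2 * q" using eqB by auto
        thus ?thesis using PP_par[of q b p \<beta> b' \<beta>'] by simp
      next
        assume "?L = ?B'"
        hence "q = - (b' * p)" "\<beta>' = 2 * q" using eqB by auto
        hence "PP b' \<beta>' b \<beta> p q = 0" using PP_par[of q b' p \<beta>' b \<beta>] by simp
        thus ?thesis by (metis PP_sym)
      next
        assume qq: "q = - (b * p) \<and> q = - (b' * p)"
        hence "- (b * p) = - (b' * p)" by metis
        hence "b * p = b' * p" by (simp only: neg_equal_iff_equal)
        moreover have "q = - (b * p)" using qq by simp
        ultimately have "b * p = b' * p" "q = - (b * p)" by simp_all
        hence "b = b'" "q = - (b * p)" using p0 by simp_all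
        thus ?thesis using PP_par[of q b p \<beta> b' \<beta>'] by simp
      qed
    qed
  next
    assume P0: "PP b \<beta> b' \<beta>' p q = 0"
    have "crosses ?L ?B ?B' \<longrightarrow> mid ?B ?B' ?L = Fin (p, q)"
    proof
      assume cr: "crosses ?L ?B ?B'"
      have gen: "\<not> q = - (t * p)" if cr': "crosses ?L (lin t (-1) s) (lin t' (-1) s')"
        and P: "PP t s t' s' p q = 0" for t s t' s'
      proof
        assume qq: "q = - (t * p)"
        hence "p * (t - t') * (2 * t * p + s) = 0" using PP_par[OF qq] P by simp
        hence "p = 0 \<or> t - t' = 0 \<or> 2 * t * p + s = 0" by simp
        hence "t = t' \<or> s = - (2 * t * p)" using p0 by (metis add_eq_0_iff right_minus_eq)
        thus False
        proof
          assume "t = t'"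
          thus False using cr' qq pB unfolding crosses_def by auto
        next
          assume "s = - (2 * t * p)"
          hence "?L = lin t (-1) s" using eqB qq by (simp add: algebra_simps)
          thus False using cr' unfolding crosses_def by auto
        qed
      qed
      have n1: "\<not> q = - (b * p)" using gen[OF cr P0] .
      have cr2: "crosses ?L ?B' ?B" using cr unfolding crosses_def by auto
      have n2: "\<not> q = - (b' * p)" using gen[OF cr2] P0 PP_sym by metis
      show "mid ?B ?B' ?L = Fin (p, q)" using midf[OF n1 n2] P0 by simp
    qed
    thus "bisector_with_mid (lin 0 1 0) ?B (lin 1 0 0) ?B' ?L (Fin (p, q))" using bis by simp
  qed
qed

lemma C2:
  assumes pq: "(p, q) \<noteq> (0, 0)" and nL: "(a, c) \<noteq> (0, 0)"
    and bis: "bisector_with_mid (lin 0 1 0) (lin b (-1) \<beta>) (lin 1 0 0) (lin b' (-1) \<beta>') (lin a c d) (Fin (p, q))"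
  shows "lin a c d = lin q p (- 2 * p * q)"
proof (cases "crosses (lin a c d) (lin 0 1 0) (lin 1 0 0)")
  case True
  hence "mid (lin 0 1 0) (lin 1 0 0) (lin a c d) = Fin (p, q)" using bis unfolding bisector_with_mid_def by blast
  hence m: "(if a = 0 \<or> c = 0 then Inf (line_dir (lin a c d)) else Fin (- d / (2 * a), - d / (2 * c))) = Fin (p, q)"
    using midAA[OF nL] by simp
  hence a0: "a \<noteq> 0" and c0: "c \<noteq> 0" by (auto split: if_splits)
  hence pe: "p = - d / (2 * a)" and qe: "q = - d / (2 * c)" using m by auto
  have nq: "(q, p) \<noteq> (0, 0)" using pq by auto
  have "a * p = q * c \<and> a * (- 2 * p * q) = q * d \<and> c * (- 2 * p * q) = p * d"
    unfolding pe qe using a0 c0 two by (simp add: field_simps)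
  thus ?thesis using lin_eq_iff[OF nL nq] by simp
next
  case False
  hence "(a = 0 \<and> d = 0) \<or> (c = 0 \<and> d = 0)" using crossesAA[OF nL] by simp
  thus ?thesis
  proof
    assume ad: "a = 0 \<and> d = 0"
    hence "lin a c d = lin 0 1 0" using nL by (simp add: lin_eq_iff)
    hence "Fin (p, q) = Fin (2 * h, (0::'a))" using bis bisA by simp
    hence "q = 0" "p \<noteq> 0" using pq by auto
    thus ?thesis using \<open>lin a c d = lin 0 1 0\<close> by (simp add: lin_eq_iff)
  next
    assume cd: "c = 0 \<and> d = 0"
    hence "lin a c d = lin 1 0 0" using nL by (simp add: lin_eq_iff)
    hence "Fin (p, q) = Fin ((0::'a), 2 * k)" using bis bisA' by simp
    hence "p = 0" "q \<noteq> 0" using pq by auto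
    thus ?thesis using \<open>lin a c d = lin 1 0 0\<close> by (simp add: lin_eq_iff)
  qed
qed

lemma key1:
  assumes pq: "(p, q) \<noteq> (0, 0)"
  shows "bisector_with_mid (lin 0 1 0) (lin b (-1) \<beta>) (lin 1 0 0) (lin b' (-1) \<beta>') (lin q p (- 2 * p * q)) (Fin (p, q))
     \<longleftrightarrow> q * (q - 2 * k) - b * b' * p * (p - 2 * h) = 0"
proof (cases "p = 0")
  case True
  hence q0: "q \<noteq> 0" using pq by simp
  have "lin q p (- 2 * p * q) = lin q 0 0" using True by simp
  also have "\<dots> = lin 1 0 0" using q0 by (subst lin_eq_iff) auto
  finally have Lq: "lin q p (- 2 * p * q) = lin 1 0 0" .
  have "bisector_with_mid (lin 0 1 0) (lin b (-1) \<beta>) (lin 1 0 0) (lin b' (-1) \<beta>') (lin q p (- 2 * p * q)) (Fin (p, q))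
     \<longleftrightarrow> Fin (p, q) = Fin (0, 2 * k)" by (simp only: Lq bisA')
  also have "\<dots> \<longleftrightarrow> q = 2 * k" using True by simp
  also have "\<dots> \<longleftrightarrow> q * (q - 2 * k) = 0" using q0 by simp
  also have "\<dots> \<longleftrightarrow> q * (q - 2 * k) - b * b' * p * (p - 2 * h) = 0" using True by simp
  finally show ?thesis .
next
  case False
  show ?thesis
  proof (cases "q = 0")
    case True
    have "lin q p (- 2 * p * q) = lin 0 p 0" using True by simp
    also have "\<dots> = lin 0 1 0" using False by (subst lin_eq_iff) auto
    finally have Lq: "lin q p (- 2 * p * q) = lin 0 1 0" .
    have "bisector_with_mid (lin 0 1 0) (lin b (-1) \<beta>) (lin 1 0 0) (lin b' (-1) \<beta>') (lin q p (- 2 * p * q)) (Fin (p, q))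
       \<longleftrightarrow> Fin (p, q) = Fin (2 * h, 0)" by (simp only: Lq bisA)
    also have "\<dots> \<longleftrightarrow> p = 2 * h" using True by simp
    also have "\<dots> \<longleftrightarrow> b * b' * p * (p - 2 * h) = 0" using False b0 b0' by simp
    also have "\<dots> \<longleftrightarrow> q * (q - 2 * k) - b * b' * p * (p - 2 * h) = 0" using True by simp
    finally show ?thesis .
  next
    case q0: False
    show ?thesis using C1[OF False q0] E0[of q p] by simp
  qed
qed

lemma P1:
  assumes pq: "(p, q) \<noteq> (0, 0)" and isL: "is_line L"
  shows "bisector_with_mid (lin 0 1 0) (lin b (-1) \<beta>) (lin 1 0 0) (lin b' (-1) \<beta>') L (Fin (p, q)) \<longleftrightarrow>
    (q * (q - 2 * k) - b * b' * p * (p - 2 * h) = 0 \<and> L = lin q p (- 2 * p * q))"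
proof
  assume bL: "bisector_with_mid (lin 0 1 0) (lin b (-1) \<beta>) (lin 1 0 0) (lin b' (-1) \<beta>') L (Fin (p, q))"
  from isL obtain a c d where nL: "(a, c) \<noteq> (0, 0)" and Le: "L = lin a c d"
    unfolding is_line_iff by (elim exE conjE)
  from bL have "bisector_with_mid (lin 0 1 0) (lin b (-1) \<beta>) (lin 1 0 0) (lin b' (-1) \<beta>') (lin a c d) (Fin (p, q))"
    unfolding Le .
  hence "lin a c d = lin q p (- 2 * p * q)" by (rule C2[OF pq nL])
  hence L: "L = lin q p (- 2 * p * q)" unfolding Le .
  from bL have "bisector_with_mid (lin 0 1 0) (lin b (-1) \<beta>) (lin 1 0 0) (lin b' (-1) \<beta>') (lin q p (- 2 * p * q)) (Fin (p, q))"
    unfolding L .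
  hence "q * (q - 2 * k) - b * b' * p * (p - 2 * h) = 0" unfolding key1[OF pq] .
  thus "q * (q - 2 * k) - b * b' * p * (p - 2 * h) = 0 \<and> L = lin q p (- 2 * p * q)" using L by (rule conjI)
next
  assume h: "q * (q - 2 * k) - b * b' * p * (p - 2 * h) = 0 \<and> L = lin q p (- 2 * p * q)"
  hence "bisector_with_mid (lin 0 1 0) (lin b (-1) \<beta>) (lin 1 0 0) (lin b' (-1) \<beta>') (lin q p (- 2 * p * q)) (Fin (p, q))"
    unfolding key1[OF pq] by (rule conjunct1)
  thus "bisector_with_mid (lin 0 1 0) (lin b (-1) \<beta>) (lin 1 0 0) (lin b' (-1) \<beta>') L (Fin (p, q))"
    using h by (simp only:)
qed

lemma parO: "(a, c) \<noteq> (0, 0) \<Longrightarrow> c \<noteq> 0 \<Longrightarrow> lin a c 0 = lin t (-1) s \<longleftrightarrow> a = - (t * c) \<and> s = 0"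
proof -
  assume n: "(a, c) \<noteq> (0, 0)" and c0: "c \<noteq> 0"
  have "lin a c 0 = lin t (-1) s \<longleftrightarrow> a * (-1) = t * c \<and> a * s = t * 0 \<and> c * s = (-1) * 0"
    using n by (simp add: lin_eq_iff)
  also have "\<dots> \<longleftrightarrow> a = - (t * c) \<and> s = 0"
  proof
    assume h: "a * (-1) = t * c \<and> a * s = t * 0 \<and> c * s = (-1) * 0"
    hence "- a = t * c" by simp
    hence "a = - (t * c)" by (metis minus_minus)
    moreover have "s = 0" using h c0 by simp
    ultimately show "a = - (t * c) \<and> s = 0" ..
  next
    assume "a = - (t * c) \<and> s = 0"
    thus "a * (-1) = t * c \<and> a * s = t * 0 \<and> c * s = (-1) * 0" by simp
  qed
  finally show ?thesis .
qed

lemma ORIG: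
  assumes a0: "a \<noteq> 0" and c0: "c \<noteq> 0" and Q0: "QQ b \<beta> b' \<beta>' a c = 0"
  shows "bisector_with_mid (lin 0 1 0) (lin b (-1) \<beta>) (lin 1 0 0) (lin b' (-1) \<beta>') (lin a c 0) (Fin (0, 0))"
proof -
  let ?L = "lin a c 0"
  let ?B = "lin b (-1) \<beta>" and ?B' = "lin b' (-1) \<beta>'"
  have nL: "(a, c) \<noteq> (0, 0)" using a0 by simp
  have isL: "is_line ?L" using nL by (rule is_line_lin)
  have cA: "crosses ?L (lin 0 1 0) (lin 1 0 0)" using crossesAA[OF nL] a0 c0 by simp
  have mA: "mid (lin 0 1 0) (lin 1 0 0) ?L = Fin (0, 0)" using midAA[OF nL] a0 c0 by simp
  have pB: "parallel ?L (lin t (-1) s) \<longleftrightarrow> a = - (t * c)" for t s using parL[OF nL] .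
  have gen: "\<not> a = - (t * c)" if cr: "crosses ?L (lin t (-1) s) (lin t' (-1) s')"
    and Q: "QQ t s t' s' a c = 0" for t s t' s'
  proof
    assume aa: "a = - (t * c)"
    hence "c * s * (t' - t) = 0" using QQ_par[OF aa] Q by simp
    hence "s = 0 \<or> t' = t" using c0 by simp
    thus False
    proof
      assume "s = 0"
      hence "?L = lin t (-1) s" using parO[OF nL c0] aa by simp
      thus False using cr unfolding crosses_def by simp
    next
      assume "t' = t"
      thus False using cr aa pB unfolding crosses_def by auto
    qed
  qed
  have "mid ?B ?B' ?L = Fin (0, 0)" if cr: "crosses ?L ?B ?B'"
  proof -
    have n1: "\<not> a = - (b * c)" using gen[OF cr Q0] .
    have cr2: "crosses ?L ?B' ?B" using cr unfolding crosses_def by auto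
    have n2: "\<not> a = - (b' * c)" using gen[OF cr2] Q0 QQ_sym by metis
    have d1: "a + b * c \<noteq> 0" and d2: "a + b' * c \<noteq> 0" using n1 n2 by (simp_all add: eq_neg_iff_add_eq_0)
    have m: "mid ?B ?B' ?L = Fin (midp (- (c * \<beta>) / (a + b * c), a * \<beta> / (a + b * c))
                     (- (c * \<beta>') / (a + b' * c), a * \<beta>' / (a + b' * c)))"
      unfolding mid_def using pB n1 n2 meet0_gen[OF nL d1] meet0_gen[OF nL d2] by simp
    show ?thesis unfolding m midp_def using mid0_x[OF d1 d2] mid0_y[OF d1 d2] Q0 by simp
  qed
  thus ?thesis unfolding bisector_with_mid_def using isL cA mA by simp
qed

lemma ORIGF:
  assumes a0: "a \<noteq> 0" and c0: "c \<noteq> 0"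
    and bis: "bisector_with_mid (lin 0 1 0) (lin b (-1) \<beta>) (lin 1 0 0) (lin b' (-1) \<beta>') (lin a c 0) (Fin (0, 0))"
  shows "QQ b \<beta> b' \<beta>' a c = 0"
proof -
  let ?L = "lin a c 0"
  let ?B = "lin b (-1) \<beta>" and ?B' = "lin b' (-1) \<beta>'"
  have nL: "(a, c) \<noteq> (0, 0)" using a0 by simp
  have pB: "parallel ?L (lin t (-1) s) \<longleftrightarrow> a = - (t * c)" for t s using parL[OF nL] .
  show ?thesis
  proof (cases "crosses ?L ?B ?B'")
    case True
    hence mm: "mid ?B ?B' ?L = Fin (0, 0)" using bis unfolding bisector_with_mid_def by blast
    hence n1: "\<not> a = - (b * c)" and n2: "\<not> a = - (b' * c)"
      unfolding mid_def using pB by (auto split: if_splits)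
    have d1: "a + b * c \<noteq> 0" and d2: "a + b' * c \<noteq> 0" using n1 n2 by (simp_all add: eq_neg_iff_add_eq_0)
    have m: "mid ?B ?B' ?L = Fin (midp (- (c * \<beta>) / (a + b * c), a * \<beta> / (a + b * c))
                     (- (c * \<beta>') / (a + b' * c), a * \<beta>' / (a + b' * c)))"
      unfolding mid_def using pB n1 n2 meet0_gen[OF nL d1] meet0_gen[OF nL d2] by simp
    hence "midp (- (c * \<beta>) / (a + b * c), a * \<beta> / (a + b * c))
                     (- (c * \<beta>') / (a + b' * c), a * \<beta>' / (a + b' * c)) = (0, 0)" using mm by simp
    hence "fst (midp (- (c * \<beta>) / (a + b * c), a * \<beta> / (a + b * c))
                     (- (c * \<beta>') / (a + b' * c), a * \<beta>' / (a + b' * c))) = 0" by simp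
    hence "(- (c * \<beta>) / (a + b * c) + - (c * \<beta>') / (a + b' * c)) / 2 = 0"
      by (simp only: midp_def fst_conv)
    hence "- (c * QQ b \<beta> b' \<beta>' a c) / ((a + b * c) * (a + b' * c)) = 0"
      using mid0_x[OF d1 d2] two by (simp only: divide_eq_0_iff) simp
    thus ?thesis using d1 d2 c0 by simp
  next
    case False
    hence "?L = ?B \<or> ?L = ?B' \<or> (a = - (b * c) \<and> a = - (b' * c))"
      unfolding crosses_def using pB by blast
    thus ?thesis
    proof (elim disjE)
      assume "?L = ?B"
      hence "a = - (b * c)" "\<beta> = 0" using parO[OF nL c0] by auto
      thus ?thesis using QQ_par[of a b c \<beta> b' \<beta>'] by simp
    next
      assume "?L = ?B'"
      hence "a = - (b' * c)" "\<beta>' = 0" using parO[OF nL c0] by auto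
      hence "QQ b' \<beta>' b \<beta> a c = 0" using QQ_par[of a b' c \<beta>' b \<beta>] by simp
      thus ?thesis by (metis QQ_sym)
    next
      assume qq: "a = - (b * c) \<and> a = - (b' * c)"
      hence "- (b * c) = - (b' * c)" by metis
      hence "b * c = b' * c" by (simp only: neg_equal_iff_equal)
      hence "b = b'" using c0 by simp
      thus ?thesis using qq QQ_par[of a b c \<beta> b' \<beta>'] by simp
    qed
  qed
qed

lemma S1: "{(x, y). q * x + p * y - 2 * p * q = 0} = lin q p (- 2 * p * q)"
  unfolding lin_def by simp

lemma S2: "{(x, y). k * y + \<mu> * h * x = 0} = lin (\<mu> * h) k 0"
  unfolding lin_def by (simp add: add.commute)

lemma MAIN:
  assumes mu: "\<mu> = b * b'"
  shows "(\<forall>L p q. is_line L \<longrightarrow> (p, q) \<noteq> (0, 0) \<longrightarrow>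
            (bisector_with_mid (lin 0 1 0) (lin b (-1) \<beta>) (lin 1 0 0) (lin b' (-1) \<beta>') L (Fin (p, q)) \<longleftrightarrow>
               (q * (q - 2 * k) - \<mu> * p * (p - 2 * h) = 0 \<and>
                L = {(x, y). q * x + p * y - 2 * p * q = 0})))
       \<and> ((h, k) = (0, 0) \<longrightarrow>
            (\<forall>L. is_line L \<and> (0, 0) \<in> L \<longrightarrow> bisector_with_mid (lin 0 1 0) (lin b (-1) \<beta>) (lin 1 0 0) (lin b' (-1) \<beta>') L (Fin (0, 0))))
       \<and> ((h, k) \<noteq> (0, 0) \<longrightarrow>
            (\<forall>L. (is_line L \<and> bisector_with_mid (lin 0 1 0) (lin b (-1) \<beta>) (lin 1 0 0) (lin b' (-1) \<beta>') L (Fin (0, 0))) \<longleftrightarrow>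
                  L = {(x, y). k * y + \<mu> * h * x = 0}))"
proof (intro conjI allI impI)
  fix L :: "('a \<times> 'a) set" and p q :: 'a
  assume isL: "is_line L" and pq: "(p, q) \<noteq> (0, 0)"
  show "bisector_with_mid (lin 0 1 0) (lin b (-1) \<beta>) (lin 1 0 0) (lin b' (-1) \<beta>') L (Fin (p, q)) \<longleftrightarrow>
               (q * (q - 2 * k) - \<mu> * p * (p - 2 * h) = 0 \<and>
                L = {(x, y). q * x + p * y - 2 * p * q = 0})"
    unfolding S1 mu by (rule P1[OF pq isL])
next
  fix L :: "('a \<times> 'a) set"
  assume hk: "(h, k) = (0, 0)" and L: "is_line L \<and> (0, 0) \<in> L"
  from L obtain a c d where nL: "(a, c) \<noteq> (0, 0)" and Le: "L = lin a c d"
    unfolding is_line_iff by (elim exE conjE)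
  have d0: "d = 0" using L Le by (simp add: lin_def)
  have h0: "h = 0" and k0: "k = 0" using hk by simp_all
  show "bisector_with_mid (lin 0 1 0) (lin b (-1) \<beta>) (lin 1 0 0) (lin b' (-1) \<beta>') L (Fin (0, 0))"
  proof (cases "a = 0")
    case True
    hence "L = lin 0 1 0" using Le d0 nL by (simp add: lin_eq_iff)
    thus ?thesis using bisA h0 by simp
  next
    case a0: False
    show ?thesis
    proof (cases "c = 0")
      case True
      hence "L = lin 1 0 0" using Le d0 nL by (simp add: lin_eq_iff)
      thus ?thesis using bisA' k0 by simp
    next
      case False
      have "QQ b \<beta> b' \<beta>' a c = 0" using QQ_hk[of a c] h0 k0 by simp
      thus ?thesis using ORIG[OF a0 False] Le d0 by simp
    qed
  qed
next
  assume hk: "(h, k) \<noteq> (0, 0)"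
  have mu0: "\<mu> \<noteq> 0" using mu b0 b0' by simp
  have nT: "(\<mu> * h, k) \<noteq> (0, 0)" using hk mu0 by simp
  fix L :: "('a \<times> 'a) set"
  show "(is_line L \<and> bisector_with_mid (lin 0 1 0) (lin b (-1) \<beta>) (lin 1 0 0) (lin b' (-1) \<beta>') L (Fin (0, 0))) \<longleftrightarrow>
                  L = {(x, y). k * y + \<mu> * h * x = 0}"
    unfolding S2
  proof
    assume H: "is_line L \<and> bisector_with_mid (lin 0 1 0) (lin b (-1) \<beta>) (lin 1 0 0) (lin b' (-1) \<beta>') L (Fin (0, 0))"
    from H obtain a c d where nL: "(a, c) \<noteq> (0, 0)" and Le: "L = lin a c d"
      unfolding is_line_iff by (elim exE conjE)
    have bis: "bisector_with_mid (lin 0 1 0) (lin b (-1) \<beta>) (lin 1 0 0) (lin b' (-1) \<beta>') (lin a c d) (Fin (0, 0))"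
      using H Le by simp
    show "L = lin (\<mu> * h) k 0"
    proof (cases "crosses (lin a c d) (lin 0 1 0) (lin 1 0 0)")
      case True
      hence "mid (lin 0 1 0) (lin 1 0 0) (lin a c d) = Fin (0, 0)" using bis unfolding bisector_with_mid_def by blast
      hence m: "(if a = 0 \<or> c = 0 then Inf (line_dir (lin a c d)) else Fin (- d / (2 * a), - d / (2 * c))) = Fin (0, 0)"
        using midAA[OF nL] by simp
      hence a0: "a \<noteq> 0" and c0: "c \<noteq> 0" by (auto split: if_splits)
      hence "- d / (2 * a) = 0" using m by auto
      hence d0: "d = 0" using a0 two by simp
      have "QQ b \<beta> b' \<beta>' a c = 0" using ORIGF[OF a0 c0] bis d0 by simp
      hence "4 * (a * k - b * b' * h * c) = 0" using QQ_hk by simp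
      hence "a * k = \<mu> * h * c" using four mu by simp
      hence "lin a c 0 = lin (\<mu> * h) k 0" using lin_eq_iff[OF nL nT] by simp
      thus ?thesis using Le d0 by simp
    next
      case False
      hence "(a = 0 \<and> d = 0) \<or> (c = 0 \<and> d = 0)" using crossesAA[OF nL] by simp
      thus ?thesis
      proof
        assume ad: "a = 0 \<and> d = 0"
        hence LA: "L = lin 0 1 0" using Le nL by (simp add: lin_eq_iff)
        hence "Fin (0, 0) = Fin (2 * h, (0::'a))" using H bisA by simp
        hence "h = 0" using two by simp
        hence "k \<noteq> 0" using hk by simp
        thus ?thesis using LA \<open>h = 0\<close> by (simp add: lin_eq_iff)
      next
        assume cd: "c = 0 \<and> d = 0"
        hence LA: "L = lin 1 0 0" using Le nL by (simp add: lin_eq_iff)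
        hence "Fin (0, 0) = Fin ((0::'a), 2 * k)" using H bisA' by simp
        hence "k = 0" using two by simp
        hence "h \<noteq> 0" using hk by simp
        thus ?thesis using LA \<open>k = 0\<close> mu0 by (simp add: lin_eq_iff)
      qed
    qed
  next
    assume Le: "L = lin (\<mu> * h) k 0"
    have isL: "is_line L" using Le nT by (simp add: is_line_lin)
    have "bisector_with_mid (lin 0 1 0) (lin b (-1) \<beta>) (lin 1 0 0) (lin b' (-1) \<beta>') L (Fin (0, 0))"
    proof (cases "h = 0")
      case True
      hence "k \<noteq> 0" using hk by simp
      hence "L = lin 0 1 0" using Le True by (simp add: lin_eq_iff)
      thus ?thesis using bisA True by simp
    next
      case h0: False
      show ?thesis
      proof (cases "k = 0")
        case True
        hence "L = lin 1 0 0" using Le h0 mu0 by (simp add: lin_eq_iff)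
        thus ?thesis using bisA' True by simp
      next
        case False
        have a0: "\<mu> * h \<noteq> 0" using mu0 h0 by simp
        have "QQ b \<beta> b' \<beta>' (\<mu> * h) k = 0" using QQ_hk[of "\<mu> * h" k] mu by (simp add: algebra_simps)
        thus ?thesis using ORIG[OF a0 False] Le by simp
      qed
    qed
    thus "is_line L \<and> bisector_with_mid (lin 0 1 0) (lin b (-1) \<beta>) (lin 1 0 0) (lin b' (-1) \<beta>') L (Fin (0, 0))"
      using isL by simp
  qed
qed

end

lemma parallel_sym: "parallel L M \<longleftrightarrow> parallel M L"
  unfolding parallel_def by auto

lemma meet_sym: "meet L M = meet M L"
  unfolding meet_def by (simp add: conj_commute)

lemma lin_slope: "lin t (-1) s = {(x, y). y = t * x + s}"
proof -
  have "t * x + (-1) * y + s = 0 \<longleftrightarrow> y = t * x + s" for x y :: 'a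
  proof -
    have "t * x + (-1) * y + s = (t * x + s) - y" by (simp add: algebra_simps)
    thus ?thesis by (metis right_minus_eq)
  qed
  thus ?thesis unfolding lin_def by auto
qed

lemma std_line:
  assumes "is_line (B :: ('a::field \<times> 'a) set)" "\<not> parallel B (lin 0 1 0)" "\<not> parallel B (lin 1 0 0)"
  shows "\<exists>t s. t \<noteq> 0 \<and> B = lin t (-1) s"
proof -
  from assms(1) obtain a c d where nL: "(a, c) \<noteq> (0, 0)" and Be: "B = lin a c d"
    unfolding is_line_iff by (elim exE conjE)
  have a0: "a \<noteq> 0" using assms(2) nL Be by (simp add: parallel_lin)
  have c0: "c \<noteq> 0" using assms(3) nL Be by (simp add: parallel_lin)
  have "lin a c d = lin (- a / c) (-1) (- d / c)"
    using nL c0 by (subst lin_eq_iff) (simp_all add: field_simps)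
  moreover have "- a / c \<noteq> 0" using a0 c0 by simp
  ultimately show ?thesis using Be by blast
qed

theorem proposition4p4:
  fixes A B A' B' :: "('a::field \<times> 'a) set" and h k \<mu> :: 'a
  assumes char: "(2::'a) \<noteq> 0"
    and std: "standard_form A B A' B'"
    and cen: "centroid A B A' B' = (h, k)"
    and coef: "\<mu> = coefficient A B A' B'"
  shows "(\<forall>L p q. is_line L \<longrightarrow> (p, q) \<noteq> (0, 0) \<longrightarrow>
            (bisector_with_mid A B A' B' L (Fin (p, q)) \<longleftrightarrow>
               (q * (q - 2 * k) - \<mu> * p * (p - 2 * h) = 0 \<and>
                L = {(x, y). q * x + p * y - 2 * p * q = 0})))
       \<and> ((h, k) = (0, 0) \<longrightarrow>
            (\<forall>L. is_line L \<and> (0, 0) \<in> L \<longrightarrow> bisector_with_mid A B A' B' L (Fin (0, 0))))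
       \<and> ((h, k) \<noteq> (0, 0) \<longrightarrow>
            (\<forall>L. (is_line L \<and> bisector_with_mid A B A' B' L (Fin (0, 0))) \<longleftrightarrow>
                  L = {(x, y). k * y + \<mu> * h * x = 0}))"
proof -
  from std have quad: "quadrilateral A B A' B'" and Ae: "A = {(x, y). y = 0}" and A'e: "A' = {(x, y). x = 0}"
    unfolding standard_form_def by auto
  have AL: "A = lin 0 1 0" unfolding Ae lin_def by simp
  have A'L: "A' = lin 1 0 0" unfolding A'e lin_def by simp
  from quad have isB: "is_line B" and isB': "is_line B'" and BB': "B \<noteq> B'"
    and np1: "\<not> parallel A B" and np2: "\<not> parallel B A'" and np3: "\<not> parallel A' B'" and np4: "\<not> parallel B' A"
    and nconc: "\<not> (\<exists>P. P \<in> A \<and> P \<in> B \<and> P \<in> A' \<and> P \<in> B')"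
    unfolding quadrilateral_def by auto
  obtain b \<beta> where b0: "b \<noteq> 0" and BL: "B = lin b (-1) \<beta>"
    using std_line[OF isB] np1 np2 AL A'L parallel_sym by metis
  obtain b' \<beta>' where b0': "b' \<noteq> 0" and B'L: "B' = lin b' (-1) \<beta>'"
    using std_line[OF isB'] np3 np4 AL A'L parallel_sym by metis
  have nB: "(b, \<beta>) \<noteq> (b', \<beta>')" using BB' BL B'L by auto
  have nc: "\<not> (\<beta> = 0 \<and> \<beta>' = 0)"
  proof
    assume "\<beta> = 0 \<and> \<beta>' = 0"
    hence "(0, 0) \<in> A \<and> (0, 0) \<in> B \<and> (0, 0) \<in> A' \<and> (0, 0) \<in> B'"
      unfolding AL A'L BL B'L lin_def by simp
    thus False using nconc by blast
  qed
  have four: "(4::'a) \<noteq> 0"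
  proof -
    have "(4::'a) = 2 * 2" by simp
    thus ?thesis using char by (metis mult_eq_0_iff)
  qed
  have m1: "meet A B = (- (\<beta> / b), 0)" unfolding AL BL using b0 by (simp add: meet_lin)
  have m2: "meet B A' = (0, \<beta>)" unfolding A'L BL using b0 by (subst meet_sym) (simp add: meet_lin)
  have m3: "meet A' B' = (0, \<beta>')" unfolding A'L B'L using b0' by (simp add: meet_lin)
  have m4: "meet B' A = (- (\<beta>' / b'), 0)" unfolding AL B'L using b0' by (subst meet_sym) (simp add: meet_lin)
  have hk: "h = (- (\<beta> / b) + 0 + 0 + - (\<beta>' / b')) / 4" "k = (0 + \<beta> + \<beta>' + 0) / 4"
    using cen unfolding centroid_def m1 m2 m3 m4 by simp_all
  have hdef: "4 * h = - (\<beta> / b + \<beta>' / b')" using hk(1) four by (simp add: mult.commute)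
  have kdef: "4 * k = \<beta> + \<beta>'" using hk(2) four by (simp add: mult.commute)
  have muE: "\<mu> = b * b'" unfolding coef coefficient_def BL B'L lin_slope slope_eq ..
  note M = MAIN[OF char b0 b0' nB nc hdef kdef muE]
  show ?thesis using M unfolding AL A'L BL B'L .
qed

end
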